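(* Let $G$ be a graph, let $L$ be a set of specified leaks on $V(G)$, and let $\ell=I(L)$. Then every specified $\ell$-leaky forcing set of $G$ is an $L$-leaky forcing set of $G$. Consequently $\operatorname{Z}_{(L)}(G)\le \operatorname{Z}^s_{(\ell)}(G)$.
   Context: All graphs are finite, simple and undirected. Zero forcing: a blue vertex $u$ with exactly one white neighbor $w$ may force $w$ (color it blue), written $u\to w$. A specified leak on $V(G)$ is an ordered pair $x\to y$ of vertices, meaning $x$ (the tail) is prohibited from forcing $y$ (the head); a set of specified leaks is thus the arc set of a directed graph on $V(G)$. For a set $L$ of specified leaks, $T(L)$ and $H(L)$ denote its sets of tails and heads. $B$ is a specified $\ell$-leaky forcing set if for every set of at most $\ell$ specified leaks, exhaustively applying the forcing rule from initial blue set $B$ without performing prohibited forces colors all of $V(G)$ blue; $\operatorname{Z}^s_{(\ell)}(G)$ is the minimum size of such a set. Two sets $L_1,L_2$ of specified leaks on $V(G)$ are isomorphic if there is a bijection $\phi:V(G)\to V(G)$ with $x\to y\in L_1$ iff $\phi(x)\to\phi(y)\in L_2$. $B$ is an $L$-leaky forcing set if $B$ colors all of $G$ blue (never performing prohibited forces) despite any set $L_1$ of specified leaks isomorphic to some subset $L_2\subseteq L$; $\operatorname{Z}_{(L)}(G)$ is the minimum size of such a set. A set $L$ of specified leaks is independent if $|T(L)|=|L|$ and $T(L)\cap H(L)=\varnothing$. $I(L)$ is the maximum size of an independent subset of $L$. *)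

theory Defs
  imports Main
begin

definition simple_graph :: "'a set \<Rightarrow> ('a \<Rightarrow> 'a \<Rightarrow> bool) \<Rightarrow> bool" where
  "simple_graph V E \<longleftrightarrow> finite V \<and> (\<forall>u v. E u v \<longrightarrow> E v u)
     \<and> (\<forall>u. \<not> E u u) \<and> (\<forall>u v. E u v \<longrightarrow> u \<in> V \<and> v \<in> V)"

text \<open>Final blue set obtained by exhaustively applying the zero forcing rule from B,
  never performing a prohibited force (u,w) \<in> L (u is prohibited from forcing w).\<close>
inductive_set leaky_closure :: "'a set \<Rightarrow> ('a \<Rightarrow> 'a \<Rightarrow> bool) \<Rightarrow> ('a \<times> 'a) set \<Rightarrow> 'a set \<Rightarrow> 'a set"
  for V E L B where
  init: "b \<in> B \<Longrightarrow> b \<in> leaky_closure V E L B"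
| force: "\<lbrakk> u \<in> leaky_closure V E L B; E u w; (u, w) \<notin> L;
            \<forall>x. E u x \<and> x \<noteq> w \<longrightarrow> x \<in> leaky_closure V E L B \<rbrakk>
          \<Longrightarrow> w \<in> leaky_closure V E L B"

definition spec_leaky_forcing_set :: "'a set \<Rightarrow> ('a \<Rightarrow> 'a \<Rightarrow> bool) \<Rightarrow> nat \<Rightarrow> 'a set \<Rightarrow> bool" where
  "spec_leaky_forcing_set V E l B \<longleftrightarrow> B \<subseteq> V \<and>
     (\<forall>L. L \<subseteq> V \<times> V \<and> card L \<le> l \<longrightarrow> leaky_closure V E L B = V)"

definition spec_leaky_forcing_number :: "'a set \<Rightarrow> ('a \<Rightarrow> 'a \<Rightarrow> bool) \<Rightarrow> nat \<Rightarrow> nat" where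
  "spec_leaky_forcing_number V E l = (LEAST k. \<exists>B. spec_leaky_forcing_set V E l B \<and> card B = k)"

definition leaks_isomorphic :: "'a set \<Rightarrow> ('a \<times> 'a) set \<Rightarrow> ('a \<times> 'a) set \<Rightarrow> bool" where
  "leaks_isomorphic V L1 L2 \<longleftrightarrow> (\<exists>\<phi>. bij_betw \<phi> V V \<and>
     (\<forall>x\<in>V. \<forall>y\<in>V. (x, y) \<in> L1 \<longleftrightarrow> (\<phi> x, \<phi> y) \<in> L2))"

definition L_leaky_forcing_set :: "'a set \<Rightarrow> ('a \<Rightarrow> 'a \<Rightarrow> bool) \<Rightarrow> ('a \<times> 'a) set \<Rightarrow> 'a set \<Rightarrow> bool" where
  "L_leaky_forcing_set V E L B \<longleftrightarrow> B \<subseteq> V \<and>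
     (\<forall>L1 L2. L1 \<subseteq> V \<times> V \<and> L2 \<subseteq> L \<and> leaks_isomorphic V L1 L2
        \<longrightarrow> leaky_closure V E L1 B = V)"

definition L_leaky_forcing_number :: "'a set \<Rightarrow> ('a \<Rightarrow> 'a \<Rightarrow> bool) \<Rightarrow> ('a \<times> 'a) set \<Rightarrow> nat" where
  "L_leaky_forcing_number V E L = (LEAST k. \<exists>B. L_leaky_forcing_set V E L B \<and> card B = k)"

definition tails :: "('a \<times> 'a) set \<Rightarrow> 'a set" where "tails L = fst ` L"
definition heads :: "('a \<times> 'a) set \<Rightarrow> 'a set" where "heads L = snd ` L"

definition independent_leaks :: "('a \<times> 'a) set \<Rightarrow> bool" where
  "independent_leaks L \<longleftrightarrow> card (tails L) = card L \<and> tails L \<inter> heads L = {}"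

definition indep_number :: "('a \<times> 'a) set \<Rightarrow> nat" where
  "indep_number L = Max {card S | S. S \<subseteq> L \<and> independent_leaks S}"

end

theory Submission
  imports Defs
begin

lemma closure_sub:
  assumes "simple_graph V E" "B \<subseteq> V"
  shows "leaky_closure V E L B \<subseteq> V"
proof
  fix x assume "x \<in> leaky_closure V E L B"
  then show "x \<in> V"
    by induction (use assms in \<open>auto simp: simple_graph_def\<close>)
qed

lemma closure_mono_leaks:
  assumes "\<And>u w. u \<in> C \<Longrightarrow> E u w \<Longrightarrow> (u,w) \<notin> L \<Longrightarrow> (\<forall>x. E u x \<and> x \<noteq> w \<longrightarrow> x \<in> C) \<Longrightarrow> w \<in> C"
    and "B \<subseteq> C"
  shows "leaky_closure V E L B \<subseteq> C"
proof
  fix x assume "x \<in> leaky_closure V E L B"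
  then show "x \<in> C"
    by induction (use assms in blast)+
qed

lemma main_part:
  assumes G: "simple_graph V E" and LV: "L \<subseteq> V \<times> V" and l: "l = indep_number L"
    and S: "spec_leaky_forcing_set V E l B"
  shows "L_leaky_forcing_set V E L B"
  unfolding L_leaky_forcing_set_def
proof (intro conjI allI impI)
  show BV: "B \<subseteq> V" using S by (simp add: spec_leaky_forcing_set_def)
  fix L1 L2 assume a: "L1 \<subseteq> V \<times> V \<and> L2 \<subseteq> L \<and> leaks_isomorphic V L1 L2"
  then obtain \<phi> where bij: "bij_betw \<phi> V V"
    and iso: "\<forall>x\<in>V. \<forall>y\<in>V. (x, y) \<in> L1 \<longleftrightarrow> (\<phi> x, \<phi> y) \<in> L2"
    unfolding leaks_isomorphic_def by blast
  have inj: "inj_on \<phi> V" using bij bij_betw_def by blast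
  have finV: "finite V" using G simple_graph_def by blast
  define C where "C = leaky_closure V E L1 B"
  have CV: "C \<subseteq> V" unfolding C_def using closure_sub[OF G BV] .
  define L' where "L' = {(u,w). u \<in> C \<and> E u w \<and> w \<notin> C \<and> (\<forall>x. E u x \<and> x \<noteq> w \<longrightarrow> x \<in> C)}"
  have EV: "\<And>u w. E u w \<Longrightarrow> u \<in> V \<and> w \<in> V" using G simple_graph_def by metis
  have L'V: "L' \<subseteq> V \<times> V" unfolding L'_def using EV by auto
  have L'L1: "L' \<subseteq> L1"
  proof
    fix p assume "p \<in> L'"
    then obtain u w where p: "p = (u,w)" and h: "u \<in> C" "E u w" "w \<notin> C"
      "\<forall>x. E u x \<and> x \<noteq> w \<longrightarrow> x \<in> C" unfolding L'_def by blast
    show "p \<in> L1"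
    proof (rule ccontr)
      assume "p \<notin> L1"
      then have "(u,w) \<notin> L1" using p by simp
      then have "w \<in> C" unfolding C_def
        using leaky_closure.force[of u V E L1 B w] h unfolding C_def by blast
      then show False using h by blast
    qed
  qed
  have sub: "leaky_closure V E L' B \<subseteq> C"
  proof (rule closure_mono_leaks)
    fix u w assume "u \<in> C" "E u w" "(u, w) \<notin> L'" "\<forall>x. E u x \<and> x \<noteq> w \<longrightarrow> x \<in> C"
    then show "w \<in> C" unfolding L'_def by auto
  next
    show "B \<subseteq> C" unfolding C_def by (simp add: leaky_closure.init subsetI)
  qed
  define M where "M = (\<lambda>(x,y). (\<phi> x, \<phi> y)) ` L'"
  have injp: "inj_on (\<lambda>(x,y). (\<phi> x, \<phi> y)) L'"
    using inj L'V unfolding inj_on_def by auto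
  have finL': "finite L'" using L'V finV by (meson finite_SigmaI finite_subset)
  have cardM: "card M = card L'" unfolding M_def using card_image[OF injp] .
  have MsubL: "M \<subseteq> L"
  proof
    fix q assume "q \<in> M"
    then obtain u w where q: "q = (\<phi> u, \<phi> w)" and uw: "(u,w) \<in> L'" unfolding M_def by auto
    then have "(u,w) \<in> L1" "u \<in> V" "w \<in> V" using L'L1 L'V by auto
    then show "q \<in> L" using iso a q by blast
  qed
  have finM: "finite M" unfolding M_def using finL' by simp
  have memM: "\<And>q. q \<in> M \<Longrightarrow> \<exists>u w. q = (\<phi> u, \<phi> w) \<and> u \<in> C \<and> E u w \<and> w \<notin> C \<and> (\<forall>x. E u x \<and> x \<noteq> w \<longrightarrow> x \<in> C)"
    unfolding M_def L'_def by auto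
  have injfst: "inj_on fst M"
  proof (rule inj_onI)
    fix p q assume pq: "p \<in> M" "q \<in> M" "fst p = fst q"
    obtain u w where hp: "p = (\<phi> u, \<phi> w)" "u \<in> C" "E u w" "w \<notin> C" "\<forall>x. E u x \<and> x \<noteq> w \<longrightarrow> x \<in> C"
      using memM[OF pq(1)] by blast
    obtain u' w' where hq: "q = (\<phi> u', \<phi> w')" "u' \<in> C" "E u' w'" "w' \<notin> C" "\<forall>x. E u' x \<and> x \<noteq> w' \<longrightarrow> x \<in> C"
      using memM[OF pq(2)] by blast
    have "\<phi> u = \<phi> u'" using pq(3) hp hq by simp
    then have "u = u'" using inj CV hp hq unfolding inj_on_def by blast
    with hp hq have "w = w'" by blast
    then show "p = q" using \<open>u = u'\<close> hp hq by simp
  qed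
  have disj: "tails M \<inter> heads M = {}"
  proof (rule ccontr)
    assume "tails M \<inter> heads M \<noteq> {}"
    then obtain p q where pq: "p \<in> M" "q \<in> M" "fst p = snd q" unfolding tails_def heads_def by auto
    obtain u w where hp: "p = (\<phi> u, \<phi> w)" "u \<in> C" "E u w" "w \<notin> C"
      using memM[OF pq(1)] by blast
    obtain u' w' where hq: "q = (\<phi> u', \<phi> w')" "u' \<in> C" "E u' w'" "w' \<notin> C"
      using memM[OF pq(2)] by blast
    have "\<phi> u = \<phi> w'" using pq(3) hp hq by simp
    moreover have "w' \<in> V" using EV hq by blast
    ultimately have "u = w'" using inj CV hp unfolding inj_on_def by blast
    then show False using hp hq by blast
  qed
  have indM: "independent_leaks M"
    unfolding independent_leaks_def using disj card_image[OF injfst] by (simp add: tails_def)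
  have finL: "finite L" using LV finV by (meson finite_SigmaI finite_subset)
  have "card M \<le> indep_number L"
    unfolding indep_number_def
  proof (rule Max_ge)
    show "finite {card S |S. S \<subseteq> L \<and> independent_leaks S}"
    proof (rule finite_subset)
      show "{card S |S. S \<subseteq> L \<and> independent_leaks S} \<subseteq> card ` Pow L" by auto
      show "finite (card ` Pow L)" using finL by simp
    qed
    show "card M \<in> {card S |S. S \<subseteq> L \<and> independent_leaks S}" using MsubL indM by blast
  qed
  then have "card L' \<le> l" using cardM l by simp
  then have "leaky_closure V E L' B = V"
    using S L'V unfolding spec_leaky_forcing_set_def by blast
  then have "V \<subseteq> C" using sub by simp
  then show "leaky_closure V E L1 B = V" using CV C_def by simp
qed

theorem theorem5p1:
  fixes V :: "'a set" and E :: "'a \<Rightarrow> 'a \<Rightarrow> bool" and L :: "('a \<times> 'a) set" and l :: nat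
  assumes "simple_graph V E"
    and "L \<subseteq> V \<times> V"
    and "l = indep_number L"
  shows "(\<forall>B. spec_leaky_forcing_set V E l B \<longrightarrow> L_leaky_forcing_set V E L B)
         \<and> L_leaky_forcing_number V E L \<le> spec_leaky_forcing_number V E l"
proof
  show A: "\<forall>B. spec_leaky_forcing_set V E l B \<longrightarrow> L_leaky_forcing_set V E L B"
    using main_part[OF assms] by blast
  have "spec_leaky_forcing_set V E l V"
    unfolding spec_leaky_forcing_set_def
  proof (intro conjI allI impI)
    fix L' show "leaky_closure V E L' V = V"
    proof
      show "leaky_closure V E L' V \<subseteq> V" using closure_sub[OF assms(1), of V] by simp
      show "V \<subseteq> leaky_closure V E L' V" by (rule subsetI, rule leaky_closure.init)
    qed
  qed simp
  then have ex: "\<exists>k. \<exists>B. spec_leaky_forcing_set V E l B \<and> card B = k" by blast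
  have "\<exists>B. spec_leaky_forcing_set V E l B \<and> card B = spec_leaky_forcing_number V E l"
    unfolding spec_leaky_forcing_number_def by (rule LeastI_ex[OF ex])
  then obtain B where B: "spec_leaky_forcing_set V E l B"
    "card B = spec_leaky_forcing_number V E l" by blast
  then have "L_leaky_forcing_set V E L B" using A by blast
  then have "\<exists>B'. L_leaky_forcing_set V E L B' \<and> card B' = card B" by blast
  then have "L_leaky_forcing_number V E L \<le> card B"
    unfolding L_leaky_forcing_number_def by (rule Least_le)
  then show "L_leaky_forcing_number V E L \<le> spec_leaky_forcing_number V E l"
    using B(2) by simp
qed

end
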